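(* Let $\mathcal E_i\equiv1\to H_i\xrightarrow{\alpha_i}G_i\xrightarrow{\beta_i}K_i\to1$ ($i=1,2$) be central extensions of multiplicative Lie algebras that are isoclinic via $(\lambda,\mu)$. Then: (1) $G_1$ and $G_2$ are isoclinic via $(\bar\lambda,\mu)$, where $\bar\lambda:G_1/\mathcal Z(G_1)\to G_2/\mathcal Z(G_2)$ is the isomorphism induced by $\lambda$, namely $\bar\lambda(g_1\mathcal Z(G_1))=g_2\mathcal Z(G_2)$ whenever $\beta_2(g_2)=\lambda(\beta_1(g_1))$; (2) $\alpha_1(H_1)=\mathcal Z(G_1)$ if and only if $\alpha_2(H_2)=\mathcal Z(G_2)$.
   Context: A multiplicative Lie algebra is a group $(G,\cdot)$ with a binary operation $\star$ such that for all $x,y,z\in G$: $x\star x=1$; $x\star(yz)=(x\star y)\,{}^y(x\star z)$; $(xy)\star z={}^x(y\star z)(x\star z)$; $((x\star y)\star{}^yz)((y\star z)\star{}^zx)((z\star x)\star{}^xy)=1$; ${}^z(x\star y)={}^zx\star{}^zy$, where ${}^xy=xyx^{-1}$. $Z(G)$ is the group center, $LZ(G)=\{x: x\star y=1\ \forall y\}$, $\mathcal Z(G)=LZ(G)\cap Z(G)$; $[x,y]$ is the group commutator; ${}^M[G,G]=(G\star G)[G,G]$ with $G\star G$ the ideal generated by all $a\star b$. A central extension is a short exact sequence $1\to H\xrightarrow{\alpha}G\xrightarrow{\beta}K\to1$ of multiplicative Lie algebras with $\alpha(H)\subseteq\mathcal Z(G)$. Central extensions $\mathcal E_1,\mathcal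 E_2$ are isoclinic via $(\lambda,\mu)$ if $\lambda:K_1\to K_2$ and $\mu:{}^M[G_1,G_1]\to{}^M[G_2,G_2]$ are multiplicative Lie algebra isomorphisms with $\mu([g,g'])=[h,h']$ and $\mu(g\star g')=h\star h'$ whenever $g,g'\in G_1$, $h,h'\in G_2$ satisfy $\beta_2(h)=\lambda\beta_1(g)$, $\beta_2(h')=\lambda\beta_1(g')$. Two multiplicative Lie algebras $G_1,G_2$ are isoclinic via $(\bar\lambda,\mu)$ if $\bar\lambda:G_1/\mathcal Z(G_1)\to G_2/\mathcal Z(G_2)$ and $\mu:{}^M[G_1,G_1]\to{}^M[G_2,G_2]$ are isomorphisms with $\mu([g,g'])=[h,h']$, $\mu(g\star g')=h\star h'$ whenever $\bar\lambda(g\mathcal Z(G_1))=h\mathcal Z(G_2)$, $\bar\lambda(g'\mathcal Z(G_1))=h'\mathcal Z(G_2)$. *)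

theory Defs
  imports "HOL-Algebra.Algebra"
begin

record 'a mlie = "'a monoid" + star :: "'a \<Rightarrow> 'a \<Rightarrow> 'a"

definition conj :: "('a, 'b) monoid_scheme \<Rightarrow> 'a \<Rightarrow> 'a \<Rightarrow> 'a" where
  "conj G x y = x \<otimes>\<^bsub>G\<^esub> y \<otimes>\<^bsub>G\<^esub> inv\<^bsub>G\<^esub> x"

definition comm :: "('a, 'b) monoid_scheme \<Rightarrow> 'a \<Rightarrow> 'a \<Rightarrow> 'a" where
  "comm G x y = x \<otimes>\<^bsub>G\<^esub> y \<otimes>\<^bsub>G\<^esub> inv\<^bsub>G\<^esub> x \<otimes>\<^bsub>G\<^esub> inv\<^bsub>G\<^esub> y"

definition mla :: "('a, 'b) mlie_scheme \<Rightarrow> bool" where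
  "mla G \<longleftrightarrow> group G \<and>
     (\<forall>x\<in>carrier G. \<forall>y\<in>carrier G. star G x y \<in> carrier G) \<and>
     (\<forall>x\<in>carrier G. star G x x = \<one>\<^bsub>G\<^esub>) \<and>
     (\<forall>x\<in>carrier G. \<forall>y\<in>carrier G. \<forall>z\<in>carrier G.
        star G x (y \<otimes>\<^bsub>G\<^esub> z) = star G x y \<otimes>\<^bsub>G\<^esub> conj G y (star G x z)) \<and>
     (\<forall>x\<in>carrier G. \<forall>y\<in>carrier G. \<forall>z\<in>carrier G.
        star G (x \<otimes>\<^bsub>G\<^esub> y) z = conj G x (star G y z) \<otimes>\<^bsub>G\<^esub> star G x z) \<and>
     (\<forall>x\<in>carrier G. \<forall>y\<in>carrier G. \<forall>z\<in>carrier G.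
        star G (star G x y) (conj G y z) \<otimes>\<^bsub>G\<^esub> star G (star G y z) (conj G z x)
          \<otimes>\<^bsub>G\<^esub> star G (star G z x) (conj G x y) = \<one>\<^bsub>G\<^esub>) \<and>
     (\<forall>x\<in>carrier G. \<forall>y\<in>carrier G. \<forall>z\<in>carrier G.
        conj G z (star G x y) = star G (conj G z x) (conj G z y))"

definition mla_hom :: "('a, 'c) mlie_scheme \<Rightarrow> ('b, 'd) mlie_scheme \<Rightarrow> ('a \<Rightarrow> 'b) \<Rightarrow> bool" where
  "mla_hom G G' f \<longleftrightarrow> f \<in> hom G G' \<and>
     (\<forall>x\<in>carrier G. \<forall>y\<in>carrier G. f (star G x y) = star G' (f x) (f y))"

definition mla_iso :: "('a, 'c) mlie_scheme \<Rightarrow> ('b, 'd) mlie_scheme \<Rightarrow> ('a \<Rightarrow> 'b) \<Rightarrow> bool" where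
  "mla_iso G G' f \<longleftrightarrow> mla_hom G G' f \<and> bij_betw f (carrier G) (carrier G')"

definition grp_center :: "('a, 'b) monoid_scheme \<Rightarrow> 'a set" where
  "grp_center G = {z \<in> carrier G. \<forall>x\<in>carrier G. z \<otimes>\<^bsub>G\<^esub> x = x \<otimes>\<^bsub>G\<^esub> z}"

definition LZ :: "('a, 'b) mlie_scheme \<Rightarrow> 'a set" where
  "LZ G = {x \<in> carrier G. \<forall>y\<in>carrier G. star G x y = \<one>\<^bsub>G\<^esub>}"

definition ZZ :: "('a, 'b) mlie_scheme \<Rightarrow> 'a set" where
  "ZZ G = LZ G \<inter> grp_center G"

definition mla_ideal :: "('a, 'b) mlie_scheme \<Rightarrow> 'a set \<Rightarrow> bool" where
  "mla_ideal G I \<longleftrightarrow> I \<lhd> G \<and>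
     (\<forall>x\<in>carrier G. \<forall>i\<in>I. star G x i \<in> I \<and> star G i x \<in> I)"

definition ideal_gen :: "('a, 'b) mlie_scheme \<Rightarrow> 'a set \<Rightarrow> 'a set" where
  "ideal_gen G S = \<Inter>{I. mla_ideal G I \<and> S \<subseteq> I}"

definition star_ideal :: "('a, 'b) mlie_scheme \<Rightarrow> 'a set" where
  "star_ideal G = ideal_gen G {star G a b | a b. a \<in> carrier G \<and> b \<in> carrier G}"

definition MComm :: "('a, 'b) mlie_scheme \<Rightarrow> 'a set" where
  "MComm G = star_ideal G <#>\<^bsub>G\<^esub> derived G (carrier G)"

definition MCommAlg :: "('a, 'b) mlie_scheme \<Rightarrow> ('a, 'b) mlie_scheme" where
  "MCommAlg G = G\<lparr>carrier := MComm G\<rparr>"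

definition MQuot :: "('a, 'b) mlie_scheme \<Rightarrow> 'a set \<Rightarrow> 'a set mlie" where
  "MQuot G N = \<lparr>carrier = rcosets\<^bsub>G\<^esub> N, monoid.mult = set_mult G, one = N,
     star = (\<lambda>A B. N #>\<^bsub>G\<^esub> star G (SOME a. a \<in> A) (SOME b. b \<in> B))\<rparr>"

definition central_ext ::
  "('a, 'x) mlie_scheme \<Rightarrow> ('b, 'y) mlie_scheme \<Rightarrow> ('c, 'z) mlie_scheme \<Rightarrow>
   ('a \<Rightarrow> 'b) \<Rightarrow> ('b \<Rightarrow> 'c) \<Rightarrow> bool" where
  "central_ext H G K \<alpha> \<beta> \<longleftrightarrow> mla H \<and> mla G \<and> mla K \<and>
     mla_hom H G \<alpha> \<and> mla_hom G K \<beta> \<and>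
     inj_on \<alpha> (carrier H) \<and> \<beta> ` carrier G = carrier K \<and>
     \<alpha> ` carrier H = kernel G K \<beta> \<and> \<alpha> ` carrier H \<subseteq> ZZ G"

definition ext_isoclinic_via ::
  "('b1, 'y1) mlie_scheme \<Rightarrow> ('c1, 'z1) mlie_scheme \<Rightarrow> ('b1 \<Rightarrow> 'c1) \<Rightarrow>
   ('b2, 'y2) mlie_scheme \<Rightarrow> ('c2, 'z2) mlie_scheme \<Rightarrow> ('b2 \<Rightarrow> 'c2) \<Rightarrow>
   ('c1 \<Rightarrow> 'c2) \<Rightarrow> ('b1 \<Rightarrow> 'b2) \<Rightarrow> bool" where
  "ext_isoclinic_via G1 K1 \<beta>1 G2 K2 \<beta>2 lam mu \<longleftrightarrow>
     mla_iso K1 K2 lam \<and> mla_iso (MCommAlg G1) (MCommAlg G2) mu \<and>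
     (\<forall>g\<in>carrier G1. \<forall>g'\<in>carrier G1. \<forall>h\<in>carrier G2. \<forall>h'\<in>carrier G2.
        \<beta>2 h = lam (\<beta>1 g) \<and> \<beta>2 h' = lam (\<beta>1 g') \<longrightarrow>
        mu (comm G1 g g') = comm G2 h h' \<and> mu (star G1 g g') = star G2 h h')"

definition isoclinic_via ::
  "('b1, 'y1) mlie_scheme \<Rightarrow> ('b2, 'y2) mlie_scheme \<Rightarrow>
   ('b1 set \<Rightarrow> 'b2 set) \<Rightarrow> ('b1 \<Rightarrow> 'b2) \<Rightarrow> bool" where
  "isoclinic_via G1 G2 lamb mu \<longleftrightarrow>
     mla_iso (MQuot G1 (ZZ G1)) (MQuot G2 (ZZ G2)) lamb \<and>
     mla_iso (MCommAlg G1) (MCommAlg G2) mu \<and>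
     (\<forall>g\<in>carrier G1. \<forall>g'\<in>carrier G1. \<forall>h\<in>carrier G2. \<forall>h'\<in>carrier G2.
        lamb (ZZ G1 #>\<^bsub>G1\<^esub> g) = ZZ G2 #>\<^bsub>G2\<^esub> h \<and>
        lamb (ZZ G1 #>\<^bsub>G1\<^esub> g') = ZZ G2 #>\<^bsub>G2\<^esub> h' \<longrightarrow>
        mu (comm G1 g g') = comm G2 h h' \<and> mu (star G1 g g') = star G2 h h')"

end

theory Submission imports Defs begin

locale mlaG = fixes G (structure) assumes mla: "mla G"
begin
sublocale group G using mla unfolding mla_def by simp

lemma star_closed[simp]: "x \<in> carrier G \<Longrightarrow> y \<in> carrier G \<Longrightarrow> star G x y \<in> carrier G"
  using mla unfolding mla_def by blast
lemma star_self[simp]: "x \<in> carrier G \<Longrightarrow> star G x x = \<one>"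
  using mla unfolding mla_def by blast
lemma star_r: "x \<in> carrier G \<Longrightarrow> y \<in> carrier G \<Longrightarrow> z \<in> carrier G \<Longrightarrow>
   star G x (y \<otimes> z) = star G x y \<otimes> conj G y (star G x z)"
  using mla unfolding mla_def by blast
lemma star_l: "x \<in> carrier G \<Longrightarrow> y \<in> carrier G \<Longrightarrow> z \<in> carrier G \<Longrightarrow>
   star G (x \<otimes> y) z = conj G x (star G y z) \<otimes> star G x z"
  using mla unfolding mla_def by blast

lemma conj_one[simp]: "x \<in> carrier G \<Longrightarrow> conj G x \<one> = \<one>"
  unfolding conj_def by simp
lemma conj_central: "z \<in> grp_center G \<Longrightarrow> t \<in> carrier G \<Longrightarrow> conj G z t = t"
  unfolding conj_def grp_center_def by (auto simp: m_assoc)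

lemma star_one_l: assumes "z \<in> carrier G" shows "star G \<one> z = \<one>"
proof -
  have "star G (\<one> \<otimes> \<one>) z = star G \<one> z \<otimes> star G \<one> z"
    using star_l[of \<one> \<one> z] assms by (simp add: conj_def)
  then show ?thesis using assms
    by (metis l_one one_closed r_cancel_one' star_closed)
qed

lemma LZ_sub: "subgroup (LZ G) G"
proof (rule subgroupI)
  show "LZ G \<subseteq> carrier G" unfolding LZ_def by auto
  show "LZ G \<noteq> {}" using star_one_l unfolding LZ_def by auto
  fix a assume a: "a \<in> LZ G"
  show "inv a \<in> LZ G" unfolding LZ_def
  proof (safe)
    show "inv a \<in> carrier G" using a unfolding LZ_def by auto
    fix y assume y: "y \<in> carrier G"
    have ac: "a \<in> carrier G" and ay: "star G a y = \<one>" using a y unfolding LZ_def by auto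
    have "star G (inv a \<otimes> a) y = conj G (inv a) \<one> \<otimes> star G (inv a) y"
      using star_l[of "inv a" a y] ac y ay by simp
    then show "star G (inv a) y = \<one>" using ac y star_one_l by simp
  qed
next
  fix a b assume a: "a \<in> LZ G" and b: "b \<in> LZ G"
  show "a \<otimes> b \<in> LZ G" unfolding LZ_def
  proof safe
    show "a \<otimes> b \<in> carrier G" using a b unfolding LZ_def by auto
    fix y assume y: "y \<in> carrier G"
    show "star G (a \<otimes> b) y = \<one>" using star_l[of a b y] a b y unfolding LZ_def by auto
  qed
qed

lemma center_sub: "subgroup (grp_center G) G"
proof (rule subgroupI)
  show "grp_center G \<subseteq> carrier G" unfolding grp_center_def by auto
  show "grp_center G \<noteq> {}" unfolding grp_center_def by auto
  fix a assume a: "a \<in> grp_center G"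
  then have ac: "a \<in> carrier G" and c: "\<And>x. x \<in> carrier G \<Longrightarrow> a \<otimes> x = x \<otimes> a"
    unfolding grp_center_def by auto
  show "inv a \<in> grp_center G" unfolding grp_center_def
  proof safe
    show "inv a \<in> carrier G" using ac by simp
    fix x assume x: "x \<in> carrier G"
    have "inv a \<otimes> x = inv a \<otimes> (x \<otimes> a) \<otimes> inv a" using ac x by (simp add: m_assoc)
    also have "\<dots> = inv a \<otimes> (a \<otimes> x) \<otimes> inv a" using c x by simp
    also have "\<dots> = x \<otimes> inv a" using ac x by (simp add: m_assoc[symmetric])
    finally show "inv a \<otimes> x = x \<otimes> inv a" .
  qed
next
  fix a b assume "a \<in> grp_center G" "b \<in> grp_center G"
  then have ac: "a \<in> carrier G" and bc: "b \<in> carrier G"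
    and ca: "\<And>x. x \<in> carrier G \<Longrightarrow> a \<otimes> x = x \<otimes> a"
    and cb: "\<And>x. x \<in> carrier G \<Longrightarrow> b \<otimes> x = x \<otimes> b"
    unfolding grp_center_def by auto
  have "a \<otimes> b \<otimes> x = x \<otimes> (a \<otimes> b)" if x: "x \<in> carrier G" for x
  proof -
    have "a \<otimes> b \<otimes> x = a \<otimes> (x \<otimes> b)" using ac bc x cb by (simp add: m_assoc)
    also have "\<dots> = (a \<otimes> x) \<otimes> b" using ac bc x by (simp add: m_assoc)
    also have "\<dots> = x \<otimes> (a \<otimes> b)" using ac bc x ca by (simp add: m_assoc)
    finally show ?thesis .
  qed
  then show "a \<otimes> b \<in> grp_center G" unfolding grp_center_def using ac bc by simp
qed

lemma ZZ_sub: "subgroup (ZZ G) G"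
  unfolding ZZ_def using LZ_sub center_sub by (rule subgroups_Inter_pair)

lemma ZZ_normal: "ZZ G \<lhd> G"
proof (rule normal_inv_iff[THEN iffD2], intro conjI ballI ZZ_sub)
  fix x h assume x: "x \<in> carrier G" and h: "h \<in> ZZ G"
  then have hc: "h \<in> carrier G" and "x \<otimes> h = h \<otimes> x" unfolding ZZ_def grp_center_def
    by auto
  then have "x \<otimes> h \<otimes> inv x = h" using x by (simp add: m_assoc)
  then show "x \<otimes> h \<otimes> inv x \<in> ZZ G" using h by simp
qed

lemma ZZ_carrier: "z \<in> ZZ G \<Longrightarrow> z \<in> carrier G"
  unfolding ZZ_def LZ_def by auto

lemma star_ZZ_r: assumes z: "z \<in> ZZ G" and y: "y \<in> carrier G" shows "star G y z = \<one>"
proof -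
  have zc: "z \<in> carrier G" and zl: "\<And>w. w \<in> carrier G \<Longrightarrow> star G z w = \<one>"
    and zcen: "z \<in> grp_center G"
    using z unfolding ZZ_def LZ_def by auto
  have e1: "star G y (z \<otimes> y) = star G y z"
    using star_r[of y z y] zc y by simp
  have "\<one> = star G (z \<otimes> y) (z \<otimes> y)" using zc y by simp
  also have "\<dots> = conj G z (star G y (z \<otimes> y)) \<otimes> star G z (z \<otimes> y)"
    using star_l[of z y "z \<otimes> y"] zc y by simp
  also have "\<dots> = star G y z" using e1 zl[of "z \<otimes> y"] zc y conj_central[OF zcen] by simp
  finally show ?thesis by simp
qed

lemma star_ZZ_inv: assumes z: "z \<in> ZZ G" and y: "y \<in> carrier G" and w: "w \<in> carrier G"
  shows "star G (z \<otimes> y) w = star G y w" and "star G y (z \<otimes> w) = star G y w"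
proof -
  have zc: "z \<in> carrier G" and zl: "\<And>w. w \<in> carrier G \<Longrightarrow> star G z w = \<one>"
    and zcen: "z \<in> grp_center G"
    using z unfolding ZZ_def LZ_def by auto
  show "star G (z \<otimes> y) w = star G y w"
    using star_l[of z y w] zc y w zl conj_central[OF zcen] by simp
  show "star G y (z \<otimes> w) = star G y w"
    using star_r[of y z w] zc y w star_ZZ_r[OF z y] conj_central[OF zcen] by simp
qed

lemma comm_closed[simp]: "x \<in> carrier G \<Longrightarrow> y \<in> carrier G \<Longrightarrow> comm G x y \<in> carrier G"
  unfolding comm_def by simp

lemma comm_ZZ: assumes z: "z \<in> ZZ G" and y: "y \<in> carrier G" and w: "w \<in> carrier G"
  shows "comm G (z \<otimes> y) w = comm G y w" and "comm G y (z \<otimes> w) = comm G y w"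
proof -
  have zc: "z \<in> carrier G" and zcen: "\<And>x. x \<in> carrier G \<Longrightarrow> z \<otimes> x = x \<otimes> z"
    using z unfolding ZZ_def grp_center_def by auto
  have yw: "y \<otimes> w \<otimes> inv y \<in> carrier G" using y w by simp
  have "comm G (z \<otimes> y) w = z \<otimes> (y \<otimes> w \<otimes> inv y) \<otimes> inv z \<otimes> inv w"
    unfolding comm_def using zc y w by (simp add: inv_mult_group m_assoc)
  also have "\<dots> = (y \<otimes> w \<otimes> inv y) \<otimes> z \<otimes> inv z \<otimes> inv w" using zcen[OF yw] by simp
  also have "\<dots> = comm G y w" unfolding comm_def using zc y w by (simp add: m_assoc)
  finally show "comm G (z \<otimes> y) w = comm G y w" .
  have yw2: "y \<otimes> w \<otimes> inv y \<otimes> inv w \<in> carrier G" using y w by simp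
  have "comm G y (z \<otimes> w) = (y \<otimes> z) \<otimes> (w \<otimes> inv y \<otimes> inv w) \<otimes> inv z"
    unfolding comm_def using zc y w by (simp add: inv_mult_group m_assoc)
  also have "\<dots> = (z \<otimes> y) \<otimes> (w \<otimes> inv y \<otimes> inv w) \<otimes> inv z" using zcen[OF y] by simp
  also have "\<dots> = z \<otimes> (y \<otimes> w \<otimes> inv y \<otimes> inv w) \<otimes> inv z" using zc y w by (simp add: m_assoc)
  also have "\<dots> = (y \<otimes> w \<otimes> inv y \<otimes> inv w) \<otimes> z \<otimes> inv z" using zcen[OF yw2] by simp
  also have "\<dots> = comm G y w" unfolding comm_def using zc y w by (simp add: m_assoc)
  finally show "comm G y (z \<otimes> w) = comm G y w" .
qed

lemma comm_one_imp: assumes x: "x \<in> carrier G" and y: "y \<in> carrier G" and c: "comm G x y = \<one>"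
  shows "x \<otimes> y = y \<otimes> x"
proof -
  have "x \<otimes> y = (x \<otimes> y \<otimes> inv x \<otimes> inv y) \<otimes> (y \<otimes> x)"
    using x y by (simp add: m_assoc[symmetric]) (simp add: m_assoc)
  then show ?thesis using c x y unfolding comm_def by simp
qed

lemma comm_commute: "x \<in> carrier G \<Longrightarrow> y \<in> carrier G \<Longrightarrow> x \<otimes> y = y \<otimes> x \<Longrightarrow> comm G x y = \<one>"
  unfolding comm_def by (simp add: m_assoc)

lemma carrier_ideal: "mla_ideal G (carrier G)"
  unfolding mla_ideal_def by (auto intro: normal_inv_iff[THEN iffD2] subgroup_self)

lemma star_ideal_sub: "star_ideal G \<subseteq> carrier G"
  unfolding star_ideal_def ideal_gen_def using carrier_ideal mla by (auto simp: mla_def)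

lemma one_star_ideal: "\<one> \<in> star_ideal G"
  unfolding star_ideal_def ideal_gen_def mla_ideal_def
  by (auto intro: subgroup.one_closed normal.axioms(1))

lemma star_in_ideal: "x \<in> carrier G \<Longrightarrow> y \<in> carrier G \<Longrightarrow> star G x y \<in> star_ideal G"
  unfolding star_ideal_def ideal_gen_def by blast

lemma derived_sub: "derived G (carrier G) \<subseteq> carrier G"
  by (simp add: derived_incl subgroup_self)

lemma one_derived: "\<one> \<in> derived G (carrier G)"
  unfolding derived_def by (rule generate.one)

lemma comm_derived: "x \<in> carrier G \<Longrightarrow> y \<in> carrier G \<Longrightarrow> comm G x y \<in> derived G (carrier G)"
  unfolding derived_def comm_def by (rule generate.incl) blast

lemma MComm_sub: "MComm G \<subseteq> carrier G"
  unfolding MComm_def set_mult_def using star_ideal_sub derived_sub by auto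

lemma comm_MComm: "x \<in> carrier G \<Longrightarrow> y \<in> carrier G \<Longrightarrow> comm G x y \<in> MComm G"
proof -
  assume a: "x \<in> carrier G" "y \<in> carrier G"
  have "comm G x y = \<one> \<otimes> comm G x y" using a by simp
  then show ?thesis unfolding MComm_def set_mult_def
    by (intro UN_I[OF one_star_ideal] UN_I[OF comm_derived[OF a]]) simp
qed

lemma star_MComm: "x \<in> carrier G \<Longrightarrow> y \<in> carrier G \<Longrightarrow> star G x y \<in> MComm G"
proof -
  assume a: "x \<in> carrier G" "y \<in> carrier G"
  have "star G x y = star G x y \<otimes> \<one>" using a by simp
  then show ?thesis unfolding MComm_def set_mult_def
    by (intro UN_I[OF star_in_ideal[OF a]] UN_I[OF one_derived]) simp
qed

lemma one_MComm: "\<one> \<in> MComm G"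
  using comm_MComm[of \<one> \<one>] comm_commute[of \<one> \<one>] by simp

end

lemma (in mlaG) MQuot_star:
  assumes g: "g \<in> carrier G" and g': "g' \<in> carrier G"
  shows "star (MQuot G (ZZ G)) (ZZ G #> g) (ZZ G #> g') = ZZ G #> star G g g'"
proof -
  have key: "star G a b = star G g g'" if a: "a \<in> ZZ G #> g" and b: "b \<in> ZZ G #> g'" for a b
  proof -
    obtain z where z: "z \<in> ZZ G" "a = z \<otimes> g" using a unfolding r_coset_def by blast
    obtain z' where z': "z' \<in> ZZ G" "b = z' \<otimes> g'" using b unfolding r_coset_def by blast
    show ?thesis using z z' g g' star_ZZ_inv ZZ_carrier by simp
  qed
  have "(SOME a. a \<in> ZZ G #> g) \<in> ZZ G #> g"
    by (rule someI[of _ g]) (rule rcos_self[OF g ZZ_sub])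
  moreover have "(SOME a. a \<in> ZZ G #> g') \<in> ZZ G #> g'"
    by (rule someI[of _ g']) (rule rcos_self[OF g' ZZ_sub])
  ultimately show ?thesis unfolding MQuot_def using key by simp
qed

theorem proposition4p3:
  fixes H1 :: "'a1 mlie" and G1 :: "'b1 mlie" and K1 :: "'c1 mlie"
    and H2 :: "'a2 mlie" and G2 :: "'b2 mlie" and K2 :: "'c2 mlie"
    and \<alpha>1 :: "'a1 \<Rightarrow> 'b1" and \<beta>1 :: "'b1 \<Rightarrow> 'c1"
    and \<alpha>2 :: "'a2 \<Rightarrow> 'b2" and \<beta>2 :: "'b2 \<Rightarrow> 'c2"
    and lam :: "'c1 \<Rightarrow> 'c2" and mu :: "'b1 \<Rightarrow> 'b2"
  assumes "central_ext H1 G1 K1 \<alpha>1 \<beta>1"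
    and "central_ext H2 G2 K2 \<alpha>2 \<beta>2"
    and "ext_isoclinic_via G1 K1 \<beta>1 G2 K2 \<beta>2 lam mu"
  shows "(\<exists>lamb. (\<forall>g1\<in>carrier G1. \<forall>g2\<in>carrier G2.
              \<beta>2 g2 = lam (\<beta>1 g1) \<longrightarrow> lamb (ZZ G1 #>\<^bsub>G1\<^esub> g1) = ZZ G2 #>\<^bsub>G2\<^esub> g2)
            \<and> isoclinic_via G1 G2 lamb mu)
       \<and> (\<alpha>1 ` carrier H1 = ZZ G1 \<longleftrightarrow> \<alpha>2 ` carrier H2 = ZZ G2)"
proof -
  have c1: "mla G1" "mla K1" "mla_hom G1 K1 \<beta>1" "\<beta>1 ` carrier G1 = carrier K1"
      "\<alpha>1 ` carrier H1 = kernel G1 K1 \<beta>1" "\<alpha>1 ` carrier H1 \<subseteq> ZZ G1"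
    using assms(1) unfolding central_ext_def by blast+
  have c2: "mla G2" "mla K2" "mla_hom G2 K2 \<beta>2" "\<beta>2 ` carrier G2 = carrier K2"
      "\<alpha>2 ` carrier H2 = kernel G2 K2 \<beta>2" "\<alpha>2 ` carrier H2 \<subseteq> ZZ G2"
    using assms(2) unfolding central_ext_def by blast+
  have iso: "mla_iso K1 K2 lam" "mla_iso (MCommAlg G1) (MCommAlg G2) mu"
    "\<forall>g\<in>carrier G1. \<forall>g'\<in>carrier G1. \<forall>h\<in>carrier G2. \<forall>h'\<in>carrier G2.
        \<beta>2 h = lam (\<beta>1 g) \<and> \<beta>2 h' = lam (\<beta>1 g') \<longrightarrow>
        mu (comm G1 g g') = comm G2 h h' \<and> mu (star G1 g g') = star G2 h h'"
    using assms(3) unfolding ext_isoclinic_via_def by blast+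
  interpret g1: mlaG G1 by (rule mlaG.intro, rule c1(1))
  interpret g2: mlaG G2 by (rule mlaG.intro, rule c2(1))
  interpret k1: mlaG K1 by (rule mlaG.intro, rule c1(2))
  interpret k2: mlaG K2 by (rule mlaG.intro, rule c2(2))
  have b1hom: "\<beta>1 \<in> hom G1 K1" using c1(3) unfolding mla_hom_def by blast
  have b2hom: "\<beta>2 \<in> hom G2 K2" using c2(3) unfolding mla_hom_def by blast
  have lhom0: "lam \<in> hom K1 K2" using iso(1) unfolding mla_iso_def mla_hom_def by blast
  interpret b1: group_hom G1 K1 \<beta>1
    by (rule group_hom.intro[OF g1.is_group k1.is_group], rule group_hom_axioms.intro, rule b1hom)
  interpret b2: group_hom G2 K2 \<beta>2
    by (rule group_hom.intro[OF g2.is_group k2.is_group], rule group_hom_axioms.intro, rule b2hom)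
  interpret l: group_hom K1 K2 lam
    by (rule group_hom.intro[OF k1.is_group k2.is_group], rule group_hom_axioms.intro, rule lhom0)
  have b1star: "\<And>x y. x \<in> carrier G1 \<Longrightarrow> y \<in> carrier G1 \<Longrightarrow> \<beta>1 (star G1 x y) = star K1 (\<beta>1 x) (\<beta>1 y)"
    using c1(3) unfolding mla_hom_def by blast
  have b2star: "\<And>x y. x \<in> carrier G2 \<Longrightarrow> y \<in> carrier G2 \<Longrightarrow> \<beta>2 (star G2 x y) = star K2 (\<beta>2 x) (\<beta>2 y)"
    using c2(3) unfolding mla_hom_def by blast
  have lstar: "\<And>x y. x \<in> carrier K1 \<Longrightarrow> y \<in> carrier K1 \<Longrightarrow> lam (star K1 x y) = star K2 (lam x) (lam y)"
    using iso(1) unfolding mla_iso_def mla_hom_def by blast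
  have b1s: "\<beta>1 ` carrier G1 = carrier K1" by (rule c1(4))
  have b2s: "\<beta>2 ` carrier G2 = carrier K2" by (rule c2(4))
  have lbij: "bij_betw lam (carrier K1) (carrier K2)" using iso(1) unfolding mla_iso_def by blast
  have lams: "lam ` carrier K1 = carrier K2" using lbij by (simp add: bij_betw_def)
  have lami: "inj_on lam (carrier K1)" using lbij by (simp add: bij_betw_def)
  have muhom: "mu \<in> hom (MCommAlg G1) (MCommAlg G2)" using iso(2) unfolding mla_iso_def mla_hom_def by blast
  have mumult: "\<And>x y. x \<in> MComm G1 \<Longrightarrow> y \<in> MComm G1 \<Longrightarrow> mu (x \<otimes>\<^bsub>G1\<^esub> y) = mu x \<otimes>\<^bsub>G2\<^esub> mu y"
    using muhom by (simp add: hom_def MCommAlg_def)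
  have mumap: "\<And>x. x \<in> MComm G1 \<Longrightarrow> mu x \<in> MComm G2"
    using muhom by (auto simp add: hom_def MCommAlg_def)
  have muinj: "inj_on mu (MComm G1)" using iso(2) unfolding mla_iso_def bij_betw_def MCommAlg_def by simp
  have compat: "\<And>g g' h h'. g \<in> carrier G1 \<Longrightarrow> g' \<in> carrier G1 \<Longrightarrow> h \<in> carrier G2 \<Longrightarrow> h' \<in> carrier G2 \<Longrightarrow>
      \<beta>2 h = lam (\<beta>1 g) \<Longrightarrow> \<beta>2 h' = lam (\<beta>1 g') \<Longrightarrow>
      mu (comm G1 g g') = comm G2 h h' \<and> mu (star G1 g g') = star G2 h h'"
    using iso(3) by blast
  have mu1: "mu \<one>\<^bsub>G1\<^esub> = \<one>\<^bsub>G2\<^esub>"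
  proof -
    have "mu \<one>\<^bsub>G1\<^esub> = mu \<one>\<^bsub>G1\<^esub> \<otimes>\<^bsub>G2\<^esub> mu \<one>\<^bsub>G1\<^esub>"
      using mumult[OF g1.one_MComm g1.one_MComm] by simp
    moreover have "mu \<one>\<^bsub>G1\<^esub> \<in> carrier G2" using mumap[OF g1.one_MComm] g2.MComm_sub by auto
    ultimately show ?thesis by (metis g2.l_cancel_one' g2.one_closed g2.r_one)
  qed
  have ex_h: "\<exists>h\<in>carrier G2. \<beta>2 h = lam (\<beta>1 g)" if "g \<in> carrier G1" for g
  proof -
    have "lam (\<beta>1 g) \<in> carrier K2" using that by simp
    then show ?thesis using b2s by (metis imageE)
  qed
  have ex_g: "\<exists>g\<in>carrier G1. \<beta>2 h = lam (\<beta>1 g)" if "h \<in> carrier G2" for h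
  proof -
    have "\<beta>2 h \<in> lam ` \<beta>1 ` carrier G1" using that b1s lams by simp
    then show ?thesis by blast
  qed
  have Cmult: "\<beta>2 (h \<otimes>\<^bsub>G2\<^esub> h') = lam (\<beta>1 (g \<otimes>\<^bsub>G1\<^esub> g'))"
    if "g \<in> carrier G1" "g' \<in> carrier G1" "h \<in> carrier G2" "h' \<in> carrier G2"
      "\<beta>2 h = lam (\<beta>1 g)" "\<beta>2 h' = lam (\<beta>1 g')" for g g' h h'
    using that by simp
  have Cinv: "\<beta>2 (inv\<^bsub>G2\<^esub> h) = lam (\<beta>1 (inv\<^bsub>G1\<^esub> g))"
    if "g \<in> carrier G1" "h \<in> carrier G2" "\<beta>2 h = lam (\<beta>1 g)" for g h
    using that by (simp add: b1.hom_inv b2.hom_inv l.hom_inv)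
  have Cstar: "\<beta>2 (star G2 h h') = lam (\<beta>1 (star G1 g g'))"
    if "g \<in> carrier G1" "g' \<in> carrier G1" "h \<in> carrier G2" "h' \<in> carrier G2"
      "\<beta>2 h = lam (\<beta>1 g)" "\<beta>2 h' = lam (\<beta>1 g')" for g g' h h'
    using that by (simp add: b1star b2star lstar)
  have ZZ1c: "\<And>z. z \<in> ZZ G1 \<Longrightarrow> z \<in> carrier G1" by (rule g1.ZZ_carrier)
  have ZZ2c: "\<And>z. z \<in> ZZ G2 \<Longrightarrow> z \<in> carrier G2" by (rule g2.ZZ_carrier)
  have E: "g \<in> ZZ G1 \<longleftrightarrow> h \<in> ZZ G2"
    if g: "g \<in> carrier G1" and h: "h \<in> carrier G2" and C: "\<beta>2 h = lam (\<beta>1 g)" for g h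
  proof
    assume gz: "g \<in> ZZ G1"
    have "\<forall>y\<in>carrier G2. star G2 h y = \<one>\<^bsub>G2\<^esub> \<and> h \<otimes>\<^bsub>G2\<^esub> y = y \<otimes>\<^bsub>G2\<^esub> h"
    proof
      fix y assume y: "y \<in> carrier G2"
      obtain g' where g': "g' \<in> carrier G1" "\<beta>2 y = lam (\<beta>1 g')" using ex_g[OF y] by blast
      have cm: "comm G1 g g' = \<one>\<^bsub>G1\<^esub>" using gz g g'
        by (intro g1.comm_commute) (auto simp: ZZ_def grp_center_def)
      have st: "star G1 g g' = \<one>\<^bsub>G1\<^esub>" using gz g' by (auto simp: ZZ_def LZ_def)
      have "comm G2 h y = \<one>\<^bsub>G2\<^esub>" "star G2 h y = \<one>\<^bsub>G2\<^esub>"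
        using compat[OF g g'(1) h y C g'(2)] cm st mu1 by auto
      then show "star G2 h y = \<one>\<^bsub>G2\<^esub> \<and> h \<otimes>\<^bsub>G2\<^esub> y = y \<otimes>\<^bsub>G2\<^esub> h"
        using g2.comm_one_imp h y by blast
    qed
    then show "h \<in> ZZ G2" using h by (auto simp: ZZ_def LZ_def grp_center_def)
  next
    assume hz: "h \<in> ZZ G2"
    have "\<forall>y\<in>carrier G1. star G1 g y = \<one>\<^bsub>G1\<^esub> \<and> g \<otimes>\<^bsub>G1\<^esub> y = y \<otimes>\<^bsub>G1\<^esub> g"
    proof
      fix y assume y: "y \<in> carrier G1"
      obtain h' where h': "h' \<in> carrier G2" "\<beta>2 h' = lam (\<beta>1 y)" using ex_h[OF y] by blast
      have cm: "comm G2 h h' = \<one>\<^bsub>G2\<^esub>" using hz h h'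
        by (intro g2.comm_commute) (auto simp: ZZ_def grp_center_def)
      have st: "star G2 h h' = \<one>\<^bsub>G2\<^esub>" using hz h' by (auto simp: ZZ_def LZ_def)
      have "mu (comm G1 g y) = mu \<one>\<^bsub>G1\<^esub>" "mu (star G1 g y) = mu \<one>\<^bsub>G1\<^esub>"
        using compat[OF g y h h'(1) C h'(2)] cm st mu1 by auto
      then have "comm G1 g y = \<one>\<^bsub>G1\<^esub>" "star G1 g y = \<one>\<^bsub>G1\<^esub>"
        using muinj g1.one_MComm g1.comm_MComm[OF g y] g1.star_MComm[OF g y]
        by (auto dest: inj_onD)
      then show "star G1 g y = \<one>\<^bsub>G1\<^esub> \<and> g \<otimes>\<^bsub>G1\<^esub> y = y \<otimes>\<^bsub>G1\<^esub> g"
        using g1.comm_one_imp g y by blast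
    qed
    then show "g \<in> ZZ G1" using g by (auto simp: ZZ_def LZ_def grp_center_def)
  qed
  define lamb where "lamb A = {h \<in> carrier G2. \<exists>g\<in>A. \<beta>2 h = lam (\<beta>1 g)}" for A
  note rm1 = subgroup.rcos_module[OF g1.ZZ_sub g1.is_group]
  note rm2 = subgroup.rcos_module[OF g2.ZZ_sub g2.is_group]
  have L: "lamb (ZZ G1 #>\<^bsub>G1\<^esub> g) = ZZ G2 #>\<^bsub>G2\<^esub> h"
    if g: "g \<in> carrier G1" and h: "h \<in> carrier G2" and C: "\<beta>2 h = lam (\<beta>1 g)" for g h
  proof (intro equalityI subsetI)
    fix x assume "x \<in> lamb (ZZ G1 #>\<^bsub>G1\<^esub> g)"
    then obtain g0 where x: "x \<in> carrier G2" and g0: "g0 \<in> ZZ G1 #>\<^bsub>G1\<^esub> g" and C0: "\<beta>2 x = lam (\<beta>1 g0)"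
      unfolding lamb_def by blast
    have g0c: "g0 \<in> carrier G1"
      using g0 g subgroup.elemrcos_carrier[OF g1.ZZ_sub g1.is_group] by blast
    have i1: "g0 \<otimes>\<^bsub>G1\<^esub> inv\<^bsub>G1\<^esub> g \<in> ZZ G1" using rm1[OF g g0c] g0 by simp
    have i2: "\<beta>2 (x \<otimes>\<^bsub>G2\<^esub> inv\<^bsub>G2\<^esub> h) = lam (\<beta>1 (g0 \<otimes>\<^bsub>G1\<^esub> inv\<^bsub>G1\<^esub> g))"
      using Cmult[OF g0c _ x _ C0 Cinv[OF g h C]] g h by simp
    have "x \<otimes>\<^bsub>G2\<^esub> inv\<^bsub>G2\<^esub> h \<in> ZZ G2"
      using E[OF _ _ i2] i1 g0c g h x by simp
    then show "x \<in> ZZ G2 #>\<^bsub>G2\<^esub> h" using rm2[OF h x] by simp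
  next
    fix x assume xr: "x \<in> ZZ G2 #>\<^bsub>G2\<^esub> h"
    have x: "x \<in> carrier G2"
      using xr h subgroup.elemrcos_carrier[OF g2.ZZ_sub g2.is_group] by blast
    have xz: "x \<otimes>\<^bsub>G2\<^esub> inv\<^bsub>G2\<^esub> h \<in> ZZ G2" using rm2[OF h x] xr by simp
    obtain g0 where g0: "g0 \<in> carrier G1" "\<beta>2 (x \<otimes>\<^bsub>G2\<^esub> inv\<^bsub>G2\<^esub> h) = lam (\<beta>1 g0)"
      using ex_g[of "x \<otimes>\<^bsub>G2\<^esub> inv\<^bsub>G2\<^esub> h"] x h by auto
    have g0z: "g0 \<in> ZZ G1" using E[OF g0(1) _ g0(2)] xz x h by simp
    have "\<beta>2 (x \<otimes>\<^bsub>G2\<^esub> inv\<^bsub>G2\<^esub> h \<otimes>\<^bsub>G2\<^esub> h) = lam (\<beta>1 (g0 \<otimes>\<^bsub>G1\<^esub> g))"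
      using Cmult[OF g0(1) g _ h g0(2) C] x h by simp
    then have "\<beta>2 x = lam (\<beta>1 (g0 \<otimes>\<^bsub>G1\<^esub> g))" using x h by (simp add: g2.m_assoc)
    moreover have "g0 \<otimes>\<^bsub>G1\<^esub> g \<in> ZZ G1 #>\<^bsub>G1\<^esub> g"
      using g1.rcosI[OF g0z _ g] g1.ZZ_carrier by blast
    ultimately show "x \<in> lamb (ZZ G1 #>\<^bsub>G1\<^esub> g)" unfolding lamb_def using x by blast
  qed
  have rc1: "\<exists>g\<in>carrier G1. A = ZZ G1 #>\<^bsub>G1\<^esub> g" if "A \<in> rcosets\<^bsub>G1\<^esub> ZZ G1" for A
    using that unfolding RCOSETS_def by blast
  have rc2: "\<exists>h\<in>carrier G2. B = ZZ G2 #>\<^bsub>G2\<^esub> h" if "B \<in> rcosets\<^bsub>G2\<^esub> ZZ G2" for B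
    using that unfolding RCOSETS_def by blast
  have rcI2: "ZZ G2 #>\<^bsub>G2\<^esub> h \<in> rcosets\<^bsub>G2\<^esub> ZZ G2" if "h \<in> carrier G2" for h
    using that unfolding RCOSETS_def by blast
  have rcI1: "ZZ G1 #>\<^bsub>G1\<^esub> g \<in> rcosets\<^bsub>G1\<^esub> ZZ G1" if "g \<in> carrier G1" for g
    using that unfolding RCOSETS_def by blast
  have Linj: "ZZ G1 #>\<^bsub>G1\<^esub> g = ZZ G1 #>\<^bsub>G1\<^esub> g'"
    if g: "g \<in> carrier G1" and g': "g' \<in> carrier G1"
      and eq: "lamb (ZZ G1 #>\<^bsub>G1\<^esub> g) = lamb (ZZ G1 #>\<^bsub>G1\<^esub> g')" for g g'
  proof -
    obtain h where h: "h \<in> carrier G2" "\<beta>2 h = lam (\<beta>1 g)" using ex_h[OF g] by blast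
    obtain h' where h': "h' \<in> carrier G2" "\<beta>2 h' = lam (\<beta>1 g')" using ex_h[OF g'] by blast
    have "ZZ G2 #>\<^bsub>G2\<^esub> h = ZZ G2 #>\<^bsub>G2\<^esub> h'" using eq L[OF g h] L[OF g' h'] by simp
    then have "h \<in> ZZ G2 #>\<^bsub>G2\<^esub> h'" using g2.rcos_self[OF h(1) g2.ZZ_sub] by simp
    then have "h \<otimes>\<^bsub>G2\<^esub> inv\<^bsub>G2\<^esub> h' \<in> ZZ G2" using rm2[OF h'(1) h(1)] by simp
    moreover have i2: "\<beta>2 (h \<otimes>\<^bsub>G2\<^esub> inv\<^bsub>G2\<^esub> h') = lam (\<beta>1 (g \<otimes>\<^bsub>G1\<^esub> inv\<^bsub>G1\<^esub> g'))"
      using Cmult[OF g _ h(1) _ h(2) Cinv[OF g' h'(1) h'(2)]] g' h' by simp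
    ultimately have "g \<otimes>\<^bsub>G1\<^esub> inv\<^bsub>G1\<^esub> g' \<in> ZZ G1" using E[OF _ _ i2] g g' h h' by simp
    then have "g \<in> ZZ G1 #>\<^bsub>G1\<^esub> g'" using rm1[OF g' g] by simp
    then show ?thesis using g1.repr_independence[OF _ g' g1.ZZ_sub] by simp
  qed
  have part1: "\<forall>g1\<in>carrier G1. \<forall>g2\<in>carrier G2.
              \<beta>2 g2 = lam (\<beta>1 g1) \<longrightarrow> lamb (ZZ G1 #>\<^bsub>G1\<^esub> g1) = ZZ G2 #>\<^bsub>G2\<^esub> g2"
    using L by blast
  have lhom: "lamb \<in> hom (MQuot G1 (ZZ G1)) (MQuot G2 (ZZ G2))"
  proof (rule homI)
    fix A assume "A \<in> carrier (MQuot G1 (ZZ G1))"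
    then obtain g where g: "g \<in> carrier G1" "A = ZZ G1 #>\<^bsub>G1\<^esub> g" using rc1 by (auto simp: MQuot_def)
    obtain h where h: "h \<in> carrier G2" "\<beta>2 h = lam (\<beta>1 g)" using ex_h[OF g(1)] by blast
    show "lamb A \<in> carrier (MQuot G2 (ZZ G2))" using L[OF g(1) h] g h rcI2 by (simp add: MQuot_def)
  next
    fix A B assume AB: "A \<in> carrier (MQuot G1 (ZZ G1))" "B \<in> carrier (MQuot G1 (ZZ G1))"
    obtain g where g: "g \<in> carrier G1" "A = ZZ G1 #>\<^bsub>G1\<^esub> g" using rc1 AB(1) by (auto simp: MQuot_def)
    obtain g' where g': "g' \<in> carrier G1" "B = ZZ G1 #>\<^bsub>G1\<^esub> g'" using rc1 AB(2) by (auto simp: MQuot_def)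
    obtain h where h: "h \<in> carrier G2" "\<beta>2 h = lam (\<beta>1 g)" using ex_h[OF g(1)] by blast
    obtain h' where h': "h' \<in> carrier G2" "\<beta>2 h' = lam (\<beta>1 g')" using ex_h[OF g'(1)] by blast
    have "lamb (A <#>\<^bsub>G1\<^esub> B) = lamb (ZZ G1 #>\<^bsub>G1\<^esub> (g \<otimes>\<^bsub>G1\<^esub> g'))"
      using normal.rcos_sum[OF g1.ZZ_normal g(1) g'(1)] g g' by simp
    also have "\<dots> = ZZ G2 #>\<^bsub>G2\<^esub> (h \<otimes>\<^bsub>G2\<^esub> h')"
      using L[OF _ _ Cmult[OF g(1) g'(1) h(1) h'(1) h(2) h'(2)]] g h g' h' by simp
    also have "\<dots> = lamb A <#>\<^bsub>G2\<^esub> lamb B"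
      using normal.rcos_sum[OF g2.ZZ_normal h(1) h'(1)] L[OF g(1) h] L[OF g'(1) h'] g g' by simp
    finally show "lamb (A \<otimes>\<^bsub>MQuot G1 (ZZ G1)\<^esub> B) = lamb A \<otimes>\<^bsub>MQuot G2 (ZZ G2)\<^esub> lamb B"
      by (simp add: MQuot_def)
  qed
  have lstar': "lamb (star (MQuot G1 (ZZ G1)) A B) = star (MQuot G2 (ZZ G2)) (lamb A) (lamb B)"
    if AB: "A \<in> carrier (MQuot G1 (ZZ G1))" "B \<in> carrier (MQuot G1 (ZZ G1))" for A B
  proof -
    obtain g where g: "g \<in> carrier G1" "A = ZZ G1 #>\<^bsub>G1\<^esub> g" using rc1 AB(1) by (auto simp: MQuot_def)
    obtain g' where g': "g' \<in> carrier G1" "B = ZZ G1 #>\<^bsub>G1\<^esub> g'" using rc1 AB(2) by (auto simp: MQuot_def)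
    obtain h where h: "h \<in> carrier G2" "\<beta>2 h = lam (\<beta>1 g)" using ex_h[OF g(1)] by blast
    obtain h' where h': "h' \<in> carrier G2" "\<beta>2 h' = lam (\<beta>1 g')" using ex_h[OF g'(1)] by blast
    have "lamb (star (MQuot G1 (ZZ G1)) A B) = lamb (ZZ G1 #>\<^bsub>G1\<^esub> star G1 g g')"
      using g1.MQuot_star[OF g(1) g'(1)] g g' by simp
    also have "\<dots> = ZZ G2 #>\<^bsub>G2\<^esub> star G2 h h'"
      using L[OF _ _ Cstar[OF g(1) g'(1) h(1) h'(1) h(2) h'(2)]] g h g' h' by simp
    also have "\<dots> = star (MQuot G2 (ZZ G2)) (lamb A) (lamb B)"
      using g2.MQuot_star[OF h(1) h'(1)] L[OF g(1) h] L[OF g'(1) h'] g g' by simp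
    finally show ?thesis .
  qed
  have linj: "inj_on lamb (carrier (MQuot G1 (ZZ G1)))"
  proof (rule inj_onI)
    fix A B assume AB: "A \<in> carrier (MQuot G1 (ZZ G1))" "B \<in> carrier (MQuot G1 (ZZ G1))" "lamb A = lamb B"
    obtain g where g: "g \<in> carrier G1" "A = ZZ G1 #>\<^bsub>G1\<^esub> g" using rc1 AB(1) by (auto simp: MQuot_def)
    obtain g' where g': "g' \<in> carrier G1" "B = ZZ G1 #>\<^bsub>G1\<^esub> g'" using rc1 AB(2) by (auto simp: MQuot_def)
    show "A = B" using Linj[OF g(1) g'(1)] AB(3) g g' by simp
  qed
  have lsurj: "lamb ` carrier (MQuot G1 (ZZ G1)) = carrier (MQuot G2 (ZZ G2))"
  proof
    show "lamb ` carrier (MQuot G1 (ZZ G1)) \<subseteq> carrier (MQuot G2 (ZZ G2))"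
      using lhom by (auto simp: hom_def)
    show "carrier (MQuot G2 (ZZ G2)) \<subseteq> lamb ` carrier (MQuot G1 (ZZ G1))"
    proof
      fix B assume "B \<in> carrier (MQuot G2 (ZZ G2))"
      then obtain h where h: "h \<in> carrier G2" "B = ZZ G2 #>\<^bsub>G2\<^esub> h" using rc2 by (auto simp: MQuot_def)
      obtain g where g: "g \<in> carrier G1" "\<beta>2 h = lam (\<beta>1 g)" using ex_g[OF h(1)] by blast
      have "B = lamb (ZZ G1 #>\<^bsub>G1\<^esub> g)" using L[OF g(1) h(1) g(2)] h by simp
      moreover have "ZZ G1 #>\<^bsub>G1\<^esub> g \<in> carrier (MQuot G1 (ZZ G1))" using rcI1[OF g(1)] by (simp add: MQuot_def)
      ultimately show "B \<in> lamb ` carrier (MQuot G1 (ZZ G1))" by blast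
    qed
  qed
  have liso: "mla_iso (MQuot G1 (ZZ G1)) (MQuot G2 (ZZ G2)) lamb"
    unfolding mla_iso_def mla_hom_def bij_betw_def using lhom lstar' linj lsurj by blast
  have lcompat: "mu (comm G1 g g') = comm G2 h h' \<and> mu (star G1 g g') = star G2 h h'"
    if g: "g \<in> carrier G1" and g': "g' \<in> carrier G1" and h: "h \<in> carrier G2" and h': "h' \<in> carrier G2"
      and e: "lamb (ZZ G1 #>\<^bsub>G1\<^esub> g) = ZZ G2 #>\<^bsub>G2\<^esub> h"
      and e': "lamb (ZZ G1 #>\<^bsub>G1\<^esub> g') = ZZ G2 #>\<^bsub>G2\<^esub> h'" for g g' h h'
  proof -
    obtain h0 where h0: "h0 \<in> carrier G2" "\<beta>2 h0 = lam (\<beta>1 g)" using ex_h[OF g] by blast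
    obtain h0' where h0': "h0' \<in> carrier G2" "\<beta>2 h0' = lam (\<beta>1 g')" using ex_h[OF g'] by blast
    have "h \<in> ZZ G2 #>\<^bsub>G2\<^esub> h0" using L[OF g h0] e g2.rcos_self[OF h g2.ZZ_sub] by simp
    then obtain z where z: "z \<in> ZZ G2" "h = z \<otimes>\<^bsub>G2\<^esub> h0" unfolding r_coset_def by blast
    have "h' \<in> ZZ G2 #>\<^bsub>G2\<^esub> h0'" using L[OF g' h0'] e' g2.rcos_self[OF h' g2.ZZ_sub] by simp
    then obtain z' where z': "z' \<in> ZZ G2" "h' = z' \<otimes>\<^bsub>G2\<^esub> h0'" unfolding r_coset_def by blast
    have "comm G2 h h' = comm G2 h0 h0'"
      using z z' h0 h0' g2.comm_ZZ ZZ2c by simp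
    moreover have "star G2 h h' = star G2 h0 h0'"
      using z z' h0 h0' g2.star_ZZ_inv ZZ2c by simp
    ultimately show ?thesis using compat[OF g g' h0(1) h0'(1) h0(2) h0'(2)] by simp
  qed
  have isoc: "isoclinic_via G1 G2 lamb mu"
    unfolding isoclinic_via_def using liso iso(2) lcompat by blast
  have ker1: "\<alpha>1 ` carrier H1 = kernel G1 K1 \<beta>1" "\<alpha>1 ` carrier H1 \<subseteq> ZZ G1" using c1(5,6) by auto
  have ker2: "\<alpha>2 ` carrier H2 = kernel G2 K2 \<beta>2" "\<alpha>2 ` carrier H2 \<subseteq> ZZ G2" using c2(5,6) by auto
  have part2: "\<alpha>1 ` carrier H1 = ZZ G1 \<longleftrightarrow> \<alpha>2 ` carrier H2 = ZZ G2"
  proof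
    assume a: "\<alpha>1 ` carrier H1 = ZZ G1"
    have "ZZ G2 \<subseteq> kernel G2 K2 \<beta>2"
    proof
      fix h assume hz: "h \<in> ZZ G2"
      then have h: "h \<in> carrier G2" by (rule ZZ2c)
      obtain g where g: "g \<in> carrier G1" "\<beta>2 h = lam (\<beta>1 g)" using ex_g[OF h] by blast
      have "g \<in> ZZ G1" using E[OF g(1) h g(2)] hz by simp
      then have "\<beta>1 g = \<one>\<^bsub>K1\<^esub>" using a ker1 by (auto simp: kernel_def)
      then show "h \<in> kernel G2 K2 \<beta>2" using g h by (simp add: kernel_def)
    qed
    then show "\<alpha>2 ` carrier H2 = ZZ G2" using ker2 by auto
  next
    assume a: "\<alpha>2 ` carrier H2 = ZZ G2"
    have "ZZ G1 \<subseteq> kernel G1 K1 \<beta>1"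
    proof
      fix g assume gz: "g \<in> ZZ G1"
      then have g: "g \<in> carrier G1" by (rule ZZ1c)
      obtain h where h: "h \<in> carrier G2" "\<beta>2 h = lam (\<beta>1 g)" using ex_h[OF g] by blast
      have "h \<in> ZZ G2" using E[OF g h(1) h(2)] gz by simp
      then have "\<beta>2 h = \<one>\<^bsub>K2\<^esub>" using a ker2 by (auto simp: kernel_def)
      then have "lam (\<beta>1 g) = lam \<one>\<^bsub>K1\<^esub>" using h by simp
      then have "\<beta>1 g = \<one>\<^bsub>K1\<^esub>" using inj_onD[OF lami] g by (metis b1.hom_closed k1.one_closed)
      then show "g \<in> kernel G1 K1 \<beta>1" using g by (simp add: kernel_def)
    qed
    then show "\<alpha>1 ` carrier H1 = ZZ G1" using ker1 by auto
  qed
  show ?thesis using part1 isoc part2 by blast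
qed

end
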